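(* Let $\mathcal{B}$ be a $d$-dimensional manifold with a torsion-free flat connection $\nabla$ and $F\in C^\infty(\mathcal{B})$. If $F$ satisfies Condition N (weak nondegeneracy) at every point of $\mathcal{B}$, then $F$ satisfies the Rüssmann condition.
   Context: $\mathcal{K}_b=\ker dF_b$. Condition N at $b$: $X\in\mathcal{K}_b$ and $\nabla_X\nabla F=0$ at $b$ imply $X=0$. For a parallel vector field $X$ on an open set $\mathcal{O}$, $\Omega_X=dF(X)$ and $\Sigma_X=\{c\in\mathcal{O}:\Omega_X(c)=0\}$. Rüssmann condition: for every open $\mathcal{O}\subset\mathcal{B}$ and every non-vanishing parallel vector field $X$ on $\mathcal{O}$, $\Omega_X$ does not vanish identically on any nonempty open subset of $\mathcal{O}$ (equivalently $\Sigma_X$ has empty interior; in flat coordinates, the image of $\xi\mapsto(\partial F/\partial\xi_k)_k$ over an open set does not lie in a hyperplane through the origin). *)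

theory Defs
  imports "HOL-Analysis.Analysis"
begin

fun Ck_on :: "nat \<Rightarrow> 'a::euclidean_space set \<Rightarrow> ('a \<Rightarrow> real) \<Rightarrow> bool" where
  "Ck_on 0 S f = continuous_on S f"
| "Ck_on (Suc k) S f =
     (f differentiable_on S \<and> (\<forall>v. Ck_on k S (\<lambda>x. frechet_derivative f (at x) v)))"

definition smooth_on :: "'a::euclidean_space set \<Rightarrow> ('a \<Rightarrow> real) \<Rightarrow> bool" where
  "smooth_on S f \<longleftrightarrow> (\<forall>k. Ck_on k S f)"

text \<open>A d-dimensional manifold (d = CARD('n)) with a torsion-free flat connection, presented
  by an atlas of flat (affine) coordinate charts: charts phi i : U i -> real^'n with inverse psi i,
  covering the space, whose transition maps are locally affine.  The connection is the one whose
  Christoffel symbols vanish in these charts.\<close>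
definition flat_affine_atlas ::
  "'i set \<Rightarrow> ('i \<Rightarrow> 'b::topological_space set) \<Rightarrow> ('i \<Rightarrow> 'b \<Rightarrow> real^'n)
     \<Rightarrow> ('i \<Rightarrow> real^'n \<Rightarrow> 'b) \<Rightarrow> bool" where
  "flat_affine_atlas I U \<phi> \<psi> \<longleftrightarrow>
     (\<Union>i\<in>I. U i) = UNIV \<and>
     (\<forall>i\<in>I. open (U i) \<and> open (\<phi> i ` U i) \<and> homeomorphism (U i) (\<phi> i ` U i) (\<phi> i) (\<psi> i)) \<and>
     (\<forall>i\<in>I. \<forall>j\<in>I. \<forall>x\<in>U i \<inter> U j. \<exists>N A c. open N \<and> x \<in> N \<and> linear A \<and>
         (\<forall>y\<in>N \<inter> U i \<inter> U j. \<phi> j y = A (\<phi> i y) + c))"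

definition loc :: "('i \<Rightarrow> real^'n \<Rightarrow> 'b) \<Rightarrow> ('b \<Rightarrow> real) \<Rightarrow> 'i \<Rightarrow> real^'n \<Rightarrow> real" where
  "loc \<psi> F i = F \<circ> \<psi> i"

text \<open>dF_b(X) in chart i, for X given by its chart components v.\<close>
definition dF :: "('i \<Rightarrow> 'b \<Rightarrow> real^'n) \<Rightarrow> ('i \<Rightarrow> real^'n \<Rightarrow> 'b) \<Rightarrow> ('b \<Rightarrow> real)
                   \<Rightarrow> 'i \<Rightarrow> 'b \<Rightarrow> real^'n \<Rightarrow> real" where
  "dF \<phi> \<psi> F i b v = frechet_derivative (loc \<psi> F i) (at (\<phi> i b)) v"

text \<open>(nabla_X nabla F)_b applied to Y, in flat chart i (the Hessian, since Christoffel symbols vanish).\<close>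
definition hessF :: "('i \<Rightarrow> 'b \<Rightarrow> real^'n) \<Rightarrow> ('i \<Rightarrow> real^'n \<Rightarrow> 'b) \<Rightarrow> ('b \<Rightarrow> real)
                   \<Rightarrow> 'i \<Rightarrow> 'b \<Rightarrow> real^'n \<Rightarrow> real^'n \<Rightarrow> real" where
  "hessF \<phi> \<psi> F i b v w =
     frechet_derivative (\<lambda>p. frechet_derivative (loc \<psi> F i) (at p) w) (at (\<phi> i b)) v"

definition condition_N where
  "condition_N I U \<phi> \<psi> F b \<longleftrightarrow>
     (\<forall>i\<in>I. b \<in> U i \<longrightarrow>
        (\<forall>v. dF \<phi> \<psi> F i b v = 0 \<and> (\<forall>w. hessF \<phi> \<psi> F i b v w = 0) \<longrightarrow> v = 0))"

text \<open>Parallel vector field on open Ob, given by chart components X i c (c in Ob and U i):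
  components are compatible under transition differentials and locally constant in flat charts.\<close>
definition parallel_field where
  "parallel_field I U \<phi> \<psi> Ob X \<longleftrightarrow>
     (\<forall>i\<in>I. \<forall>j\<in>I. \<forall>c\<in>Ob \<inter> U i \<inter> U j.
        X j c = frechet_derivative (\<phi> j \<circ> \<psi> i) (at (\<phi> i c)) (X i c)) \<and>
     (\<forall>i\<in>I. \<forall>c\<in>Ob \<inter> U i. \<exists>N. open N \<and> c \<in> N \<and> (\<forall>c'\<in>N \<inter> Ob \<inter> U i. X i c' = X i c))"

definition nonvanishing_field where
  "nonvanishing_field I U Ob X \<longleftrightarrow> (\<forall>i\<in>I. \<forall>c\<in>Ob \<inter> U i. X i c \<noteq> 0)"

text \<open>Omega_X(c) = dF(X)(c), computed in a chart containing c; Sigma_X its zero set.\<close>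
definition Sigma_X where
  "Sigma_X I U \<phi> \<psi> F Ob X = {c\<in>Ob. \<exists>i\<in>I. c \<in> U i \<and> dF \<phi> \<psi> F i c (X i c) = 0}"

definition russmann_condition where
  "russmann_condition I U \<phi> \<psi> F \<longleftrightarrow>
     (\<forall>Ob X. open Ob \<and> parallel_field I U \<phi> \<psi> Ob X \<and> nonvanishing_field I U Ob X \<longrightarrow>
        interior (Sigma_X I U \<phi> \<psi> F Ob X) = {})"

end

theory Submission
  imports Defs
begin

lemma deriv_eq_local:
  fixes g h :: "'a::real_normed_vector \<Rightarrow> 'b::real_normed_vector"
  assumes "open S" "x\<in>S" "\<forall>y\<in>S. g y = h y" "(g has_derivative g') (at x)" "(h has_derivative h') (at x)"
  shows "g' = h'"
proof -
  have "(h has_derivative g') (at x)"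
    using has_derivative_transform_within_open[OF assms(4,1,2)] assms(3) by metis
  then show ?thesis using assms(5) has_derivative_unique by blast
qed

lemma line_const:
  fixes f :: "'a::euclidean_space \<Rightarrow> real"
  assumes d: "\<forall>y\<in>ball p0 r. f differentiable at y"
    and z: "\<forall>y\<in>ball p0 r. frechet_derivative f (at y) v = 0"
    and q: "dist p0 q < r/2" and s: "\<bar>s\<bar> * norm v < r/2"
  shows "f (q + s *\<^sub>R v) = f q"
proof -
  let ?T = "closed_segment 0 s"
  have inb: "q + t *\<^sub>R v \<in> ball p0 r" if "t \<in> ?T" for t
  proof -
    have "\<bar>t\<bar> \<le> \<bar>s\<bar>" using that by (auto simp: closed_segment_eq_real_ivl split: if_splits)
    then have "\<bar>t\<bar> * norm v \<le> \<bar>s\<bar> * norm v" by (simp add: mult_right_mono)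
    moreover have "dist p0 (q + t *\<^sub>R v) \<le> dist p0 q + norm (t *\<^sub>R v)"
      by (metis dist_norm dist_triangle2 norm_minus_commute add_diff_cancel_left')
    ultimately show ?thesis using q s by (simp add: mem_ball)
  qed
  have "((\<lambda>t. f (q + t *\<^sub>R v)) has_derivative (\<lambda>h. 0)) (at t within ?T)" if "t \<in> ?T" for t
  proof -
    have 1: "((\<lambda>t. q + t *\<^sub>R v) has_derivative (\<lambda>h. h *\<^sub>R v)) (at t within ?T)"
      by (auto intro!: derivative_eq_intros)
    have 2: "(f has_derivative frechet_derivative f (at (q + t *\<^sub>R v))) (at (q + t *\<^sub>R v))"
      using d inb[OF that] frechet_derivative_works by blast
    have 3: "((\<lambda>t. f (q + t *\<^sub>R v)) has_derivative (\<lambda>h. frechet_derivative f (at (q + t *\<^sub>R v)) (h *\<^sub>R v))) (at t within ?T)"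
      using has_derivative_compose[OF 1 2] by simp
    have "linear (frechet_derivative f (at (q + t *\<^sub>R v)))"
      using 2 has_derivative_linear by blast
    then have "(\<lambda>h. frechet_derivative f (at (q + t *\<^sub>R v)) (h *\<^sub>R v)) = (\<lambda>h. 0)"
      using z inb[OF that] by (simp add: linear_cmul)
    then show ?thesis using 3 by simp
  qed
  then obtain c where "\<forall>t\<in>?T. f (q + t *\<^sub>R v) = c"
    using has_derivative_zero_constant[OF convex_closed_segment] by blast
  then show ?thesis by (metis add.right_neutral ends_in_segment(1,2) scale_zero_left)
qed

lemma key_hess:
  fixes f :: "'a::euclidean_space \<Rightarrow> real"
  assumes P: "open P" "p0 \<in> P" and d: "\<forall>p\<in>P. f differentiable at p"
    and dw: "(\<lambda>x. frechet_derivative f (at x) w) differentiable at p0"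
    and z: "\<forall>p\<in>P. frechet_derivative f (at p) v = 0"
  shows "frechet_derivative (\<lambda>x. frechet_derivative f (at x) w) (at p0) v = 0"
proof -
  obtain r where r: "r > 0" "ball p0 r \<subseteq> P" using P open_contains_ball by blast
  define \<delta> where "\<delta> = r / (2 * (norm v + 1))"
  define \<epsilon> where "\<epsilon> = r / (2 * (norm w + 1))"
  have dpos: "\<delta> > 0" "\<epsilon> > 0" using r by (auto simp: \<delta>_def \<epsilon>_def add_pos_nonneg intro!: divide_pos_pos add_nonneg_pos)
  have sb: "\<bar>s\<bar> * norm v < r/2" if "\<bar>s\<bar> < \<delta>" for s
  proof -
    have "\<bar>s\<bar> * norm v \<le> \<delta> * norm v" using that by (simp add: mult_right_mono)
    also have "\<dots> < \<delta> * (norm v + 1)" using dpos by simp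
    also have "\<dots> = r/2" using norm_ge_zero[of v] unfolding \<delta>_def by (simp add: divide_simps) (smt (verit) norm_ge_zero)
    finally show ?thesis .
  qed
  have tb: "\<bar>t\<bar> * norm w < r/2" if "\<bar>t\<bar> < \<epsilon>" for t
  proof -
    have "\<bar>t\<bar> * norm w \<le> \<epsilon> * norm w" using that by (simp add: mult_right_mono)
    also have "\<dots> < \<epsilon> * (norm w + 1)" using dpos by simp
    also have "\<dots> = r/2" using norm_ge_zero[of w] unfolding \<epsilon>_def by (simp add: divide_simps) (smt (verit) norm_ge_zero)
    finally show ?thesis .
  qed
  have dB: "\<forall>y\<in>ball p0 r. f differentiable at y" using d r by blast
  have zB: "\<forall>y\<in>ball p0 r. frechet_derivative f (at y) v = 0" using z r by blast
  have step2: "frechet_derivative f (at (p0 + s *\<^sub>R v)) w = frechet_derivative f (at p0) w"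
    if s: "\<bar>s\<bar> < \<delta>" for s
  proof -
    let ?q = "p0 + s *\<^sub>R v"
    have qb: "?q \<in> ball p0 r" using sb[OF s] r by (simp add: dist_norm)
    have eq: "\<forall>t\<in>{-\<epsilon><..<\<epsilon>}. f (?q + t *\<^sub>R w) = f (p0 + t *\<^sub>R w)"
    proof
      fix t assume "t \<in> {-\<epsilon><..<\<epsilon>}"
      then have "\<bar>t\<bar> < \<epsilon>" by auto
      then have "dist p0 (p0 + t *\<^sub>R w) < r/2" using tb by (simp add: dist_norm)
      from line_const[OF dB zB this sb[OF s]]
      show "f (?q + t *\<^sub>R w) = f (p0 + t *\<^sub>R w)" by (simp add: algebra_simps)
    qed
    have g1: "((\<lambda>t. f (?q + t *\<^sub>R w)) has_derivative (\<lambda>h. frechet_derivative f (at ?q) (h *\<^sub>R w))) (at 0)"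
    proof -
      have 1: "((\<lambda>t. ?q + t *\<^sub>R w) has_derivative (\<lambda>h. h *\<^sub>R w)) (at 0)"
        by (auto intro!: derivative_eq_intros)
      have 2: "(f has_derivative frechet_derivative f (at ?q)) (at (?q + 0 *\<^sub>R w))"
        using dB qb by (simp flip: frechet_derivative_works)
      show ?thesis using has_derivative_compose[OF 1 2] by simp
    qed
    have g2: "((\<lambda>t. f (p0 + t *\<^sub>R w)) has_derivative (\<lambda>h. frechet_derivative f (at p0) (h *\<^sub>R w))) (at 0)"
    proof -
      have 1: "((\<lambda>t. p0 + t *\<^sub>R w) has_derivative (\<lambda>h. h *\<^sub>R w)) (at 0)"
        by (auto intro!: derivative_eq_intros)
      have 2: "(f has_derivative frechet_derivative f (at p0)) (at (p0 + 0 *\<^sub>R w))"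
        using dB r by (simp flip: frechet_derivative_works)
      show ?thesis using has_derivative_compose[OF 1 2] by simp
    qed
    have "(\<lambda>h. frechet_derivative f (at ?q) (h *\<^sub>R w)) = (\<lambda>h. frechet_derivative f (at p0) (h *\<^sub>R w))"
      by (rule deriv_eq_local[OF _ _ eq g1 g2]) (use dpos in auto)
    then show ?thesis by (metis scaleR_one)
  qed
  let ?h = "\<lambda>x. frechet_derivative f (at x) w"
  let ?L = "frechet_derivative ?h (at p0)"
  have k1: "((\<lambda>s. ?h (p0 + s *\<^sub>R v)) has_derivative (\<lambda>s. ?L (s *\<^sub>R v))) (at 0)"
  proof -
    have 1: "((\<lambda>t. p0 + t *\<^sub>R v) has_derivative (\<lambda>h. h *\<^sub>R v)) (at 0)"
      by (auto intro!: derivative_eq_intros)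
    have 2: "(?h has_derivative ?L) (at (p0 + 0 *\<^sub>R v))"
      using dw by (simp flip: frechet_derivative_works)
    show ?thesis using has_derivative_compose[OF 1 2] by simp
  qed
  have k2: "((\<lambda>s. ?h p0) has_derivative (\<lambda>s. 0)) (at 0)" by simp
  have "(\<lambda>s. ?L (s *\<^sub>R v)) = (\<lambda>s. 0)"
    by (rule deriv_eq_local[OF _ _ _ k1 k2, of "{-\<delta><..<\<delta>}"]) (use dpos step2 in auto)
  then show ?thesis by (metis scaleR_one)
qed

lemma atlas_hom:
  assumes "flat_affine_atlas I U \<phi> \<psi>" "i \<in> I"
  shows "open (U i)" "open (\<phi> i ` U i)" "homeomorphism (U i) (\<phi> i ` U i) (\<phi> i) (\<psi> i)"
  using assms unfolding flat_affine_atlas_def by auto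

lemma chart_open_image:
  assumes "flat_affine_atlas I U \<phi> \<psi>" "i \<in> I" "open V" "V \<subseteq> U i"
  shows "open (\<phi> i ` V)"
proof -
  have "openin (top_of_set (\<phi> i ` U i)) (\<phi> i ` V)"
    by (rule homeomorphism_imp_open_map[OF atlas_hom(3)[OF assms(1,2)]])
       (use assms open_subset in blast)
  then show ?thesis using openin_open_trans atlas_hom(2)[OF assms(1,2)] by blast
qed

lemma smooth_diff:
  assumes "smooth_on S f" "open S" "x \<in> S"
  shows "f differentiable at x" "(\<lambda>y. frechet_derivative f (at y) w) differentiable at x"
proof -
  have "Ck_on (Suc (Suc 0)) S f" using assms(1) unfolding smooth_on_def by blast
  then have "f differentiable_on S" "(\<lambda>y. frechet_derivative f (at y) w) differentiable_on S"
    by auto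
  then show "f differentiable at x" "(\<lambda>y. frechet_derivative f (at y) w) differentiable at x"
    using assms(2,3) differentiable_on_eq_differentiable_at by blast+
qed

lemma transfer:
  fixes \<phi> :: "'i \<Rightarrow> 'b::topological_space \<Rightarrow> real^'n" and \<psi> :: "'i \<Rightarrow> real^'n \<Rightarrow> 'b"
  assumes at: "flat_affine_atlas I U \<phi> \<psi>"
    and sm: "\<forall>i\<in>I. smooth_on (\<phi> i ` U i) (F \<circ> \<psi> i)"
    and ij: "i \<in> I" "j \<in> I"
    and pf: "parallel_field I U \<phi> \<psi> Ob X"
    and c: "c \<in> Ob" "c \<in> U i" "c \<in> U j"
  shows "dF \<phi> \<psi> F i c (X i c) = dF \<phi> \<psi> F j c (X j c)"
proof -
  have all: "\<forall>x\<in>U i \<inter> U j. \<exists>N A c. open N \<and> x \<in> N \<and> linear A \<and> (\<forall>y\<in>N \<inter> U i \<inter> U j. \<phi> j y = A (\<phi> i y) + c)"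
    using at ij unfolding flat_affine_atlas_def by blast
  have "c \<in> U i \<inter> U j" using c by blast
  from bspec[OF all this] obtain N A c' where N: "open N" "c \<in> N" "linear A"
    and NA: "\<forall>y\<in>N \<inter> U i \<inter> U j. \<phi> j y = A (\<phi> i y) + c'"
    by blast
  have hi: "homeomorphism (U i) (\<phi> i ` U i) (\<phi> i) (\<psi> i)" using atlas_hom[OF at ij(1)] by blast
  have hj: "homeomorphism (U j) (\<phi> j ` U j) (\<phi> j) (\<psi> j)" using atlas_hom[OF at ij(2)] by blast
  have ii: "\<And>y. y \<in> U i \<Longrightarrow> \<psi> i (\<phi> i y) = y" using hi unfolding homeomorphism_def by blast
  have jj: "\<And>y. y \<in> U j \<Longrightarrow> \<psi> j (\<phi> j y) = y" using hj unfolding homeomorphism_def by blast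
  define P where "P = \<phi> i ` (N \<inter> U i \<inter> U j)"
  have Po: "open P" unfolding P_def
    by (rule chart_open_image[OF at ij(1)]) (use N atlas_hom[OF at ij(1)] atlas_hom[OF at ij(2)] in auto)
  have cP: "\<phi> i c \<in> P" unfolding P_def using N c by auto
  define T where "T = \<phi> j \<circ> \<psi> i"
  have TP: "\<forall>p\<in>P. (\<lambda>p. A p + c') p = T p" unfolding P_def T_def using NA ii by auto
  have TC: "\<forall>p\<in>P. loc \<psi> F j (T p) = loc \<psi> F i p" unfolding P_def T_def loc_def using ii jj by auto
  have "((\<lambda>p. A p + c') has_derivative A) (at (\<phi> i c))"
    using linear_imp_has_derivative[OF N(3)] by (auto intro!: derivative_eq_intros)
  then have TD: "(T has_derivative A) (at (\<phi> i c))"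
    by (rule has_derivative_transform_within_open[OF _ Po cP]) (use TP in simp)
  then have fT: "frechet_derivative T (at (\<phi> i c)) = A" using frechet_derivative_at by metis
  have Tc: "T (\<phi> i c) = \<phi> j c" unfolding T_def using ii c by simp
  let ?L = "frechet_derivative (loc \<psi> F j) (at (\<phi> j c))"
  have "loc \<psi> F j differentiable at (\<phi> j c)"
    unfolding loc_def
    by (rule smooth_diff(1)[of "\<phi> j ` U j" "F \<circ> \<psi> j"]) (use sm ij atlas_hom[OF at ij(2)] c in auto)
  then have LD: "(loc \<psi> F j has_derivative ?L) (at (T (\<phi> i c)))"
    using Tc by (simp flip: frechet_derivative_works)
  have "((\<lambda>p. loc \<psi> F j (T p)) has_derivative (\<lambda>x. ?L (A x))) (at (\<phi> i c))"
    using has_derivative_compose[OF TD LD] .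
  then have "(loc \<psi> F i has_derivative (\<lambda>x. ?L (A x))) (at (\<phi> i c))"
    by (rule has_derivative_transform_within_open[OF _ Po cP]) (use TC in simp)
  then have fi: "frechet_derivative (loc \<psi> F i) (at (\<phi> i c)) = (\<lambda>x. ?L (A x))"
    using frechet_derivative_at by metis
  have "X j c = frechet_derivative (\<phi> j \<circ> \<psi> i) (at (\<phi> i c)) (X i c)"
    using pf ij c unfolding parallel_field_def by blast
  then have "X j c = A (X i c)" using fT unfolding T_def by simp
  then show ?thesis unfolding dF_def fi by simp
qed

theorem mainTheorem10:
  fixes I :: "'i set" and U :: "'i \<Rightarrow> 'b::topological_space set"
    and \<phi> :: "'i \<Rightarrow> 'b \<Rightarrow> real^'n" and \<psi> :: "'i \<Rightarrow> real^'n \<Rightarrow> 'b"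
    and F :: "'b \<Rightarrow> real"
  assumes "flat_affine_atlas I U \<phi> \<psi>"
    and "\<forall>i\<in>I. smooth_on (\<phi> i ` U i) (F \<circ> \<psi> i)"
    and "\<forall>b. condition_N I U \<phi> \<psi> F b"
  shows "russmann_condition I U \<phi> \<psi> F"
proof -
  note at = assms(1) and sm = assms(2) and cN = assms(3)
  show ?thesis unfolding russmann_condition_def
  proof (intro allI impI)
    fix Ob X
    assume H: "open Ob \<and> parallel_field I U \<phi> \<psi> Ob X \<and> nonvanishing_field I U Ob X"
    then have pf: "parallel_field I U \<phi> \<psi> Ob X" and nv: "nonvanishing_field I U Ob X" by auto
    let ?S = "Sigma_X I U \<phi> \<psi> F Ob X"
    show "interior ?S = {}"
    proof (rule ccontr)
      assume "interior ?S \<noteq> {}"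
      then obtain c0 where "c0 \<in> interior ?S" by blast
      then obtain W where W: "open W" "c0 \<in> W" "W \<subseteq> ?S" by (meson interiorE)
      have SOb: "?S \<subseteq> Ob" unfolding Sigma_X_def by blast
      have c0Ob: "c0 \<in> Ob" using W SOb by blast
      have "(\<Union>i\<in>I. U i) = UNIV" using at unfolding flat_affine_atlas_def by blast
      then obtain i0 where i0: "i0 \<in> I" "c0 \<in> U i0" by blast
      have "\<forall>i\<in>I. \<forall>c\<in>Ob \<inter> U i. \<exists>N. open N \<and> c \<in> N \<and> (\<forall>c'\<in>N \<inter> Ob \<inter> U i. X i c' = X i c)"
        using pf unfolding parallel_field_def by blast
      then obtain N0 where N0: "open N0" "c0 \<in> N0" "\<forall>c'\<in>N0 \<inter> Ob \<inter> U i0. X i0 c' = X i0 c0"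
        using i0 c0Ob by blast
      define v where "v = X i0 c0"
      have vnz: "v \<noteq> 0" using nv i0 c0Ob unfolding nonvanishing_field_def v_def by blast
      define V where "V = W \<inter> N0 \<inter> U i0"
      have Vo: "open V" unfolding V_def using W N0 atlas_hom[OF at i0(1)] by auto
      have VU: "V \<subseteq> U i0" unfolding V_def by blast
      have c0V: "c0 \<in> V" unfolding V_def using W N0 i0 by blast
      have zV: "dF \<phi> \<psi> F i0 c v = 0" if cV: "c \<in> V" for c
      proof -
        have cS: "c \<in> ?S" using cV W unfolding V_def by blast
        then obtain j where j: "j \<in> I" "c \<in> U j" "dF \<phi> \<psi> F j c (X j c) = 0" "c \<in> Ob"
          unfolding Sigma_X_def by blast
        have "X i0 c = v" using N0 cV j(4) unfolding V_def v_def by blast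
        moreover have "dF \<phi> \<psi> F i0 c (X i0 c) = dF \<phi> \<psi> F j c (X j c)"
          by (rule transfer[OF at sm i0(1) j(1) pf j(4)]) (use cV VU j in auto)
        ultimately show ?thesis using j(3) by simp
      qed
      define P where "P = \<phi> i0 ` V"
      have Po: "open P" unfolding P_def by (rule chart_open_image[OF at i0(1) Vo VU])
      have p0P: "\<phi> i0 c0 \<in> P" unfolding P_def using c0V by blast
      have hi: "homeomorphism (U i0) (\<phi> i0 ` U i0) (\<phi> i0) (\<psi> i0)" using atlas_hom[OF at i0(1)] by blast
      have ii: "\<And>y. y \<in> U i0 \<Longrightarrow> \<psi> i0 (\<phi> i0 y) = y" using hi unfolding homeomorphism_def by blast
      let ?f = "loc \<psi> F i0"
      have smf: "smooth_on (\<phi> i0 ` U i0) ?f" using sm i0 unfolding loc_def by blast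
      have oU: "open (\<phi> i0 ` U i0)" using atlas_hom[OF at i0(1)] by blast
      have PU: "P \<subseteq> \<phi> i0 ` U i0" unfolding P_def using VU by blast
      have dP: "\<forall>p\<in>P. ?f differentiable at p"
        using smooth_diff(1)[OF smf oU] PU by blast
      have zP: "\<forall>p\<in>P. frechet_derivative ?f (at p) v = 0"
        using zV unfolding P_def dF_def by blast
      have hz: "hessF \<phi> \<psi> F i0 c0 v w = 0" for w
        unfolding hessF_def
        by (rule key_hess[OF Po p0P dP _ zP]) (use smooth_diff(2)[OF smf oU] PU p0P in blast)
      have dz: "dF \<phi> \<psi> F i0 c0 v = 0" using zV c0V by blast
      have "v = 0" using cN i0 dz hz unfolding condition_N_def by blast
      then show False using vnz by blast
    qed
  qed
qed

end
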